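(* Let $D$ be a square-free integer, $p$ an odd prime, $k,\ell$ positive integers and $c_D$ a positive integer with $\gcd(c_D k, p) = 1$. Let $N = c_D k p^{\ell} - 1$ be an odd integer with Jacobi symbol $\left(\frac{D}{N}\right) = -1$, and let $w \in \mathcal{G}_N(D)$. Suppose there exists an integer $j$ with $1 \le j \le \ell$ such that: (i) $\Phi_p(w^{c_D k p^{j-1}}) \equiv 0 \pmod{N}$, where $\Phi_p$ is the $p$-th cyclotomic polynomial, and (ii) $2j \ge \log_p(c_D k) + \ell$. Then $N$ is prime.
   Context: For an integer $n \ge 2$ and a square-free integer $D$: if $D \equiv 2,3 \pmod 4$, let $\mathcal{I}_n(D) = \{a + b\sqrt{D} : a,b \in \mathbb{Z}/n\mathbb{Z}\}$ (the ring $\mathbb{Z}[\sqrt D]/n\mathbb{Z}[\sqrt D]$) and $\mathcal{G}_n(D) = \{a + b\sqrt{D} \in \mathcal{I}_n(D) : a^2 - Db^2 \equiv 1 \pmod n\}$; if $D \equiv 1 \pmod 4$, let $\omega = \frac{1+\sqrt D}{2}$, $\mathcal{I}_n(D) = \{a + b\omega : a,b \in \mathbb{Z}/n\mathbb{Z}\}$ (the ring $\mathbb{Z}[\omega]/n\mathbb{Z}[\omega]$) and $\mathcal{G}_n(D) = \{a + b\omega \in \mathcal{I}_n(D) : a^2 + ab + \frac{1-D}{4} b^2 \equiv 1 \pmod n\}$. Powers are computed in $\mathcal{I}_n(D)$, a congruence $x \equiv y \pmod n$ for $x,y \in \mathcal{I}_n(D)$ means equality in $\mathcal{I}_n(D)$,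 and polynomials are evaluated in $\mathcal{I}_n(D)$. *)

theory Defs
  imports "HOL-Number_Theory.Number_Theory" "HOL-Computational_Algebra.Squarefree"
begin

definition jacobi :: "int \<Rightarrow> nat \<Rightarrow> int" where
  "jacobi a n = (\<Prod>q\<in>prime_factors n. Legendre a (int q) ^ multiplicity q n)"

(* Elements of I_n(D) are pairs (a,b) of residues in {0..<n}:
   a + b sqrt D  if D = 2,3 mod 4,   a + b omega  (omega = (1+sqrt D)/2) if D = 1 mod 4. *)
definition qmul :: "int \<Rightarrow> int \<Rightarrow> int \<times> int \<Rightarrow> int \<times> int \<Rightarrow> int \<times> int" where
  "qmul n D x y = (case x of (a, b) \<Rightarrow> case y of (c, d) \<Rightarrow>
     if D mod 4 = 1
     then ((a * c + b * d * ((D - 1) div 4)) mod n, (a * d + b * c + b * d) mod n)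
     else ((a * c + D * b * d) mod n, (a * d + b * c) mod n))"

definition qadd :: "int \<Rightarrow> int \<times> int \<Rightarrow> int \<times> int \<Rightarrow> int \<times> int" where
  "qadd n x y = ((fst x + fst y) mod n, (snd x + snd y) mod n)"

definition qone :: "int \<Rightarrow> int \<times> int" where
  "qone n = (1 mod n, 0)"

definition qzero :: "int \<times> int" where
  "qzero = (0, 0)"

definition qpow :: "int \<Rightarrow> int \<Rightarrow> int \<times> int \<Rightarrow> nat \<Rightarrow> int \<times> int" where
  "qpow n D x k = (qmul n D x ^^ k) (qone n)"

definition qnorm :: "int \<Rightarrow> int \<times> int \<Rightarrow> int" where
  "qnorm D x = (case x of (a, b) \<Rightarrow>
     if D mod 4 = 1 then a^2 + a * b + ((1 - D) div 4) * b^2 else a^2 - D * b^2)"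

definition G :: "int \<Rightarrow> int \<Rightarrow> (int \<times> int) set" where
  "G n D = {(a, b). 0 \<le> a \<and> a < n \<and> 0 \<le> b \<and> b < n \<and> [qnorm D (a, b) = 1] (mod n)}"

(* The p-th cyclotomic polynomial for prime p is Phi_p(X) = 1 + X + ... + X^(p-1);
   evaluation of Phi_p at x in I_n(D). *)
definition cyclo_prime_eval :: "int \<Rightarrow> int \<Rightarrow> nat \<Rightarrow> int \<times> int \<Rightarrow> int \<times> int" where
  "cyclo_prime_eval n D p x = foldr (\<lambda>i acc. qadd n (qpow n D x i) acc) [0..<p] qzero"

end

theory Submission imports Defs "HOL-Computational_Algebra.Polynomial" begin

definition fp :: "int \<Rightarrow> int \<Rightarrow> int poly" where "fp t m = [:-m, -t, 1:]"
definition cg :: "int \<Rightarrow> int \<Rightarrow> int \<Rightarrow> int poly \<Rightarrow> int poly \<Rightarrow> bool" where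
  "cg q t m P Q \<longleftrightarrow> (\<exists>A B. P - Q = [:q:] * A + fp t m * B)"

lemma cg_refl: "cg q t m P P"
  unfolding cg_def by (rule exI[of _ 0], rule exI[of _ 0]) simp

lemma cg_sym: "cg q t m P Q \<Longrightarrow> cg q t m Q P"
  unfolding cg_def
proof (elim exE)
  fix A B assume "P - Q = [:q:] * A + fp t m * B"
  then have "Q - P = [:q:] * (-A) + fp t m * (-B)" by (simp add: algebra_simps smult_add_right smult_diff_right)
  then show "\<exists>A B. Q - P = [:q:] * A + fp t m * B" by blast
qed

lemma cg_trans: "cg q t m P Q \<Longrightarrow> cg q t m Q R \<Longrightarrow> cg q t m P R"
  unfolding cg_def
proof (elim exE)
  fix A B A' B' assume "P - Q = [:q:] * A + fp t m * B" "Q - R = [:q:] * A' + fp t m * B'"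
  then have "P - R = [:q:] * (A + A') + fp t m * (B + B')" by (simp add: algebra_simps smult_add_right smult_diff_right)
  then show "\<exists>A B. P - R = [:q:] * A + fp t m * B" by blast
qed

lemma cg_add: "cg q t m P Q \<Longrightarrow> cg q t m P' Q' \<Longrightarrow> cg q t m (P + P') (Q + Q')"
  unfolding cg_def
proof (elim exE)
  fix A B A' B' assume "P - Q = [:q:] * A + fp t m * B" "P' - Q' = [:q:] * A' + fp t m * B'"
  then have "(P + P') - (Q + Q') = [:q:] * (A + A') + fp t m * (B + B')" by (simp add: algebra_simps smult_add_right smult_diff_right)
  then show "\<exists>A B. P + P' - (Q + Q') = [:q:] * A + fp t m * B" by blast
qed

lemma cg_mult: "cg q t m P Q \<Longrightarrow> cg q t m P' Q' \<Longrightarrow> cg q t m (P * P') (Q * Q')"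
  unfolding cg_def
proof (elim exE)
  fix A B A' B' assume h: "P - Q = [:q:] * A + fp t m * B" "P' - Q' = [:q:] * A' + fp t m * B'"
  have "P * P' - Q * Q' = (P - Q) * P' + Q * (P' - Q')" by (simp add: algebra_simps smult_add_right smult_diff_right)
  also have "\<dots> = [:q:] * (A * P' + Q * A') + fp t m * (B * P' + Q * B')"
    unfolding h by (simp add: algebra_simps smult_add_right smult_diff_right smult_add_left)
  finally show "\<exists>A B. P * P' - Q * Q' = [:q:] * A + fp t m * B" by blast
qed

lemma cg_power: "cg q t m P Q \<Longrightarrow> cg q t m (P ^ n) (Q ^ n)"
  by (induction n) (auto intro: cg_mult cg_refl)

lemma cg_sum: "(\<And>i. i < (n::nat) \<Longrightarrow> cg q t m (f i) (g i)) \<Longrightarrow> cg q t m (\<Sum>i<n. f i) (\<Sum>i<n. g i)"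
  by (induction n) (auto intro: cg_add cg_refl)

lemma cg_dvd: "q dvd n \<Longrightarrow> cg n t m P Q \<Longrightarrow> cg q t m P Q"
  unfolding cg_def
proof (elim exE)
  fix A B assume "q dvd n" "P - Q = [:n:] * A + fp t m * B"
  then obtain r where r: "n = q * r" by blast
  have "[:n:] = [:q:] * [:r:]" using r by simp
  then have "P - Q = [:q:] * ([:r:] * A) + fp t m * B" using \<open>P - Q = _\<close> by (simp add: algebra_simps smult_add_right smult_diff_right)
  then show "\<exists>A B. P - Q = [:q:] * A + fp t m * B" by blast
qed

lemma cg_const: "[a = b] (mod q) \<Longrightarrow> cg q t m [:a:] [:b:]"
  unfolding cg_def
proof -
  assume "[a = b] (mod q)"
  then obtain r where "a - b = q * r"
    by (metis cong_iff_dvd_diff cong_sym dvd_def)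
  then have "[:a:] - [:b:] = [:q:] * [:r:] + fp t m * 0" by simp
  then show "\<exists>A B. [:a:] - [:b:] = [:q:] * A + fp t m * B" by blast
qed

lemma cg_smult: "cg q t m (smult q P) 0"
  unfolding cg_def by (rule exI[of _ P], rule exI[of _ 0]) simp

lemma cg_fp: "cg q t m (fp t m * P) 0"
  unfolding cg_def by (rule exI[of _ 0], rule exI[of _ P]) simp

lemma cg_diff0: "cg q t m P Q \<longleftrightarrow> cg q t m (P - Q) 0"
  unfolding cg_def by simp

lemma cg_cancel2:
  assumes "odd q" "cg q t m (smult 2 P) (smult 2 Q)" shows "cg q t m P Q"
proof -
  obtain A B where h: "smult 2 P - smult 2 Q = [:q:] * A + fp t m * B"
    using assms(2) unfolding cg_def by blast
  obtain h2 where q: "q + 1 = 2 * h2" using assms(1) by (metis dvd_def odd_even_add odd_one)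
  have "[:q+1:] * (P - Q) = [:h2:] * (smult 2 P - smult 2 Q)"
    using q by (simp add: algebra_simps smult_add_right flip: smult_diff_right)
  then have "P - Q = [:q:] * ([:h2:] * A - (P - Q)) + fp t m * ([:h2:] * B)"
    unfolding h by (simp add: algebra_simps smult_add_right smult_diff_right smult_add_left)
  then show ?thesis unfolding cg_def by blast
qed

lemma fermat_int:
  fixes a :: int and q :: nat assumes "prime q" shows "[a ^ q = a] (mod int q)"
proof -
  define x where "x = nat (a mod int q)"
  have q0: "q > 0" using assms prime_gt_0_nat by blast
  have ax: "[a = int x] (mod int q)" unfolding x_def using q0
    by (simp add: cong_def)
  have "[x ^ q = x] (mod q)"
  proof (cases "q dvd x")
    case True
    then show ?thesis using q0
      by (metis cong_0_iff cong_sym cong_trans dvd_power gr0_implies_Suc power_Suc dvd_mult2 cong_refl)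
  next
    case False
    then have "[x ^ (q - 1) = 1] (mod q)" using fermat_theorem assms by blast
    then have "[x ^ (q - 1) * x = 1 * x] (mod q)" by (rule cong_mult) simp
    moreover have "x ^ (q - 1) * x = x ^ q" using q0
      by (metis Suc_diff_1 power_Suc2)
    ultimately show ?thesis by simp
  qed
  then have "[int x ^ q = int x] (mod int q)"
    by (metis cong_int_iff of_nat_power)
  moreover have "[a ^ q = int x ^ q] (mod int q)" using ax by (rule cong_pow)
  ultimately show ?thesis using ax by (metis cong_sym cong_trans)
qed

lemma frob_ring:
  fixes P Q :: "'a::comm_ring_1" assumes "prime q"
  shows "\<exists>R. (P + Q) ^ q - P ^ q - Q ^ q = of_nat q * R"
proof -
  have q1: "q > 0" using assms prime_gt_0_nat by blast
  define T where "T k = of_nat (q choose k) * P ^ k * Q ^ (q - k)" for k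
  have set: "{..q} = insert q (insert 0 {0<..<q})" using q1 by auto
  have "(P + Q) ^ q = (\<Sum>k\<le>q. T k)" unfolding T_def by (rule binomial_ring)
  also have "\<dots> = T q + (T 0 + (\<Sum>k\<in>{0<..<q}. T k))" unfolding set using q1
    by (simp add: sum.insert)
  also have "T q = P ^ q" unfolding T_def by simp
  also have "T 0 = Q ^ q" unfolding T_def by simp
  finally have e: "(P + Q) ^ q - P ^ q - Q ^ q = (\<Sum>k\<in>{0<..<q}. T k)" by (simp add: algebra_simps)
  have "\<forall>k\<in>{0<..<q}. T k = of_nat q * (of_nat ((q choose k) div q) * P ^ k * Q ^ (q - k))"
  proof
    fix k assume "k \<in> {0<..<q}"
    then have "q dvd (q choose k)" using dvd_choose_prime assms q1 by auto
    then have "q choose k = q * ((q choose k) div q)" by simp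
    then show "T k = of_nat q * (of_nat ((q choose k) div q) * P ^ k * Q ^ (q - k))"
      unfolding T_def by (metis (no_types, lifting) mult.assoc of_nat_mult)
  qed
  then have "(\<Sum>k\<in>{0<..<q}. T k) = of_nat q * (\<Sum>k\<in>{0<..<q}. of_nat ((q choose k) div q) * P ^ k * Q ^ (q - k))"
    by (simp add: sum_distrib_left)
  then show ?thesis using e by metis
qed

lemma cg_frob: assumes "prime q" shows "cg (int q) t m ((P + Q) ^ q) (P ^ q + Q ^ q)"
proof -
  obtain R where "(P + Q) ^ q - P ^ q - Q ^ q = of_nat q * R" using frob_ring assms by blast
  moreover have "(of_nat q :: int poly) = [:int q:]" by (simp add: of_nat_poly)
  ultimately have "(P + Q) ^ q - (P ^ q + Q ^ q) = [:int q:] * R + fp t m * 0" by (simp add: algebra_simps)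
  then show ?thesis unfolding cg_def by blast
qed

lemma coeff_fp_mult:
  "coeff (fp t m * B) (Suc (Suc i)) = coeff B i - t * coeff B (Suc i) - m * coeff B (Suc (Suc i))"
  "coeff (fp t m * B) 0 = - m * coeff B 0"
  "coeff (fp t m * B) (Suc 0) = - m * coeff B (Suc 0) - t * coeff B 0"
  by (simp_all add: fp_def mult_pCons_left algebra_simps)

lemma cg_faithful:
  assumes "cg q t m [:e0, e1:] 0" shows "q dvd e0 \<and> q dvd e1"
proof -
  obtain A B where h: "[:e0, e1:] = [:q:] * A + fp t m * B" using assms unfolding cg_def by auto
  have ci: "coeff [:e0, e1:] i = q * coeff A i + coeff (fp t m * B) i" for i
    using h by (metis coeff_add coeff_smult smult_one mult_smult_left mult_1)
  define K where "K = Suc (degree B)"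
  have "\<forall>i. K \<le> i + r \<longrightarrow> q dvd coeff B i" for r
  proof (induction r)
    case 0
    then show ?case unfolding K_def by (auto simp: coeff_eq_0)
  next
    case (Suc r)
    show ?case
    proof (intro allI impI)
      fix i assume "K \<le> i + Suc r"
      show "q dvd coeff B i"
      proof (cases "K \<le> i + r")
        case True then show ?thesis using Suc by blast
      next
        case False
        have d1: "q dvd coeff B (Suc i)" using Suc \<open>K \<le> i + Suc r\<close> by auto
        have d2: "q dvd coeff B (Suc (Suc i))" using Suc \<open>K \<le> i + Suc r\<close> by auto
        have "0 = q * coeff A (Suc (Suc i)) + (coeff B i - t * coeff B (Suc i) - m * coeff B (Suc (Suc i)))"
          using ci[of "Suc (Suc i)"] by (simp add: coeff_fp_mult)
        then have "coeff B i = t * coeff B (Suc i) + m * coeff B (Suc (Suc i)) - q * coeff A (Suc (Suc i))"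
          by linarith
        then show ?thesis using d1 d2 by simp
      qed
    qed
  qed
  then have all: "q dvd coeff B i" for i by (metis le_add2)
  have "e0 = q * coeff A 0 - m * coeff B 0" using ci[of 0] by (simp add: coeff_fp_mult)
  moreover have "e1 = q * coeff A 1 - m * coeff B 1 - t * coeff B 0" using ci[of 1] by (simp add: coeff_fp_mult)
  ultimately show ?thesis using all[of 0] all[of 1] by simp
qed

definition tt :: "int \<Rightarrow> int" where "tt D = (if D mod 4 = 1 then 1 else 0)"
definition mm :: "int \<Rightarrow> int" where "mm D = (if D mod 4 = 1 then (D - 1) div 4 else D)"
definition pp :: "int \<times> int \<Rightarrow> int poly" where "pp x = [:fst x, snd x:]"

lemma cg_modred: "cg n t m [:u mod n, v mod n:] [:u, v:]"
proof -
  have "[:u mod n, v mod n:] - [:u, v:] = [:n:] * [:- (u div n), - (v div n):] + fp t m * 0"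
    by (simp add: minus_div_mult_eq_mod[symmetric] algebra_simps)
  then show ?thesis unfolding cg_def by blast
qed

lemma cg_prod2: "cg n t m [:a * c + m * (b * d), a * d + b * c + t * (b * d):] ([:a, b:] * [:c, d:])"
proof -
  have "[:a * c + m * (b * d), a * d + b * c + t * (b * d):] - [:a, b:] * [:c, d:] = [:n:] * 0 + fp t m * [:- (b * d):]"
    by (simp add: fp_def mult_pCons_left algebra_simps)
  then show ?thesis unfolding cg_def by blast
qed

lemma qmul_cg: "cg n (tt D) (mm D) (pp (qmul n D x y)) (pp x * pp y)"
proof -
  obtain a b where x: "x = (a, b)" by (cases x)
  obtain c d where y: "y = (c, d)" by (cases y)
  have "qmul n D x y = ((a * c + mm D * (b * d)) mod n, (a * d + b * c + tt D * (b * d)) mod n)"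
    unfolding x y qmul_def tt_def mm_def by (simp add: algebra_simps)
  then have "pp (qmul n D x y) = [:(a * c + mm D * (b * d)) mod n, (a * d + b * c + tt D * (b * d)) mod n:]"
    by (simp add: pp_def)
  moreover have "pp x * pp y = [:a, b:] * [:c, d:]" by (simp add: pp_def x y)
  ultimately show ?thesis using cg_trans[OF cg_modred cg_prod2] by metis
qed

lemma qpow_cg: "cg n (tt D) (mm D) (pp (qpow n D x k)) (pp x ^ k)"
proof (induction k)
  case 0
  have "pp (qone n) = [:1 mod n, 0 mod n:]" by (simp add: pp_def qone_def)
  then have "cg n (tt D) (mm D) (pp (qone n)) [:1, 0:]" using cg_modred by metis
  then show ?case by (simp add: qpow_def one_pCons)
next
  case (Suc k)
  have "qpow n D x (Suc k) = qmul n D x (qpow n D x k)" by (simp add: qpow_def)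
  then show ?case using cg_trans[OF qmul_cg cg_mult[OF cg_refl Suc]] by simp
qed

lemma qadd_cg: "cg n t m (pp (qadd n x y)) (pp x + pp y)"
proof -
  have "pp (qadd n x y) = [:(fst x + fst y) mod n, (snd x + snd y) mod n:]" by (simp add: pp_def qadd_def)
  moreover have "pp x + pp y = [:fst x + fst y, snd x + snd y:]" by (simp add: pp_def)
  ultimately show ?thesis using cg_modred by metis
qed

lemma fold_cg: "cg n (tt D) (mm D) (pp (foldr (\<lambda>i acc. qadd n (qpow n D x i) acc) xs qzero))
   (sum_list (map (\<lambda>i. pp x ^ i) xs))"
proof (induction xs)
  case Nil
  then show ?case by (simp add: pp_def qzero_def cg_refl)
next
  case (Cons a xs)
  then show ?case using cg_trans[OF qadd_cg cg_add[OF qpow_cg Cons]] by simp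
qed

lemma cyclo_cg: "cg n (tt D) (mm D) (pp (cyclo_prime_eval n D p x)) (\<Sum>i<p. pp x ^ i)"
proof -
  have "sum_list (map (\<lambda>i. pp x ^ i) [0..<p]) = (\<Sum>i<p. pp x ^ i)"
    by (simp add: sum_list_distinct_conv_sum_set atLeast0LessThan)
  then show ?thesis using fold_cg[of n D x "[0..<p]"] unfolding cyclo_prime_eval_def by simp
qed

lemma qnorm_eq: "qnorm D (a, b) = a^2 + tt D * a * b - mm D * b^2"
proof (cases "D mod 4 = 1")
  case True
  then obtain r where "D = 4 * r + 1" by (metis mult.commute div_mult_mod_eq)
  then have "(1 - D) div 4 = - ((D - 1) div 4)" by simp
  then show ?thesis using True by (simp add: qnorm_def tt_def mm_def)
qed (simp add: qnorm_def tt_def mm_def)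

declare cg_trans[trans]

lemma eps_exists:
  fixes q :: nat and \<Delta> :: int
  assumes "prime q" "q = 2 * h + 1"
  shows "\<exists>\<epsilon>. [\<Delta> ^ h = \<epsilon>] (mod int q) \<and> ((\<epsilon> = 0 \<and> int q dvd \<Delta>) \<or> \<epsilon> = 1 \<or> \<epsilon> = -1)"
proof (cases "int q dvd \<Delta>")
  case True
  have "h > 0" using assms prime_gt_1_nat by (cases h) auto
  then have "int q dvd \<Delta> ^ h" using True by (meson dvd_power dvd_trans) 
  then show ?thesis using True by (metis cong_0_iff)
next
  case False
  have pq: "prime (int q)" using assms(1) by simp
  have "[\<Delta> ^ (2 * h + 1) = \<Delta>] (mod int q)" using fermat_int assms by metis
  then have "int q dvd \<Delta> * (\<Delta> ^ h * \<Delta> ^ h - 1)"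
    by (simp add: cong_iff_dvd_diff cong_sym_eq power_add power_mult algebra_simps power2_eq_square flip: power_mult_distrib)
  then have "int q dvd (\<Delta> ^ h * \<Delta> ^ h - 1)" using False pq prime_dvd_mult_iff by blast
  then have "int q dvd (\<Delta> ^ h - 1) * (\<Delta> ^ h + 1)" by (simp add: algebra_simps)
  then have "int q dvd (\<Delta> ^ h - 1) \<or> int q dvd (\<Delta> ^ h - (-1))" using pq prime_dvd_mult_iff[of "int q"] by simp
  then show ?thesis by (metis cong_iff_dvd_diff)
qed

lemma cg_smult_const: "smult c P = [:c:] * P" by simp

lemma key_E:
  fixes q :: nat and a b t m :: int
  assumes q: "prime q" "odd q" and t: "t = 0 \<or> t = 1"
    and nrm: "[a^2 + t * a * b - m * b^2 = 1] (mod int q)"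
  shows "\<exists>E \<in> {q - 1, q + 1, 2 * q}. cg (int q) t m ([:a, b:] ^ E) 1"
proof -
  let ?Q = "int q"
  define z where "z = [:a, b:]"
  define z' where "z' = [:a + b * t, -b:]"
  define s where "s = [:-t, 2:]"
  define \<Delta> where "\<Delta> = t^2 + 4 * m"
  define c where "c = 2 * a + b * t"
  obtain h where h: "q = 2 * h + 1" using q(2) by (metis oddE)
  have q1: "q > 1" using q prime_gt_1_nat by blast
  have zz': "cg ?Q t m (z * z') 1"
  proof -
    have "z * z' - [:a^2 + t * a * b - m * b^2:] = fp t m * [:- (b^2):]"
      unfolding z_def z'_def by (simp add: fp_def mult_pCons_left algebra_simps power2_eq_square)
    then have "cg ?Q t m (z * z') [:a^2 + t * a * b - m * b^2:]"
      using cg_fp cg_diff0 by metis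
    also have "cg ?Q t m \<dots> [:1:]" using cg_const nrm by blast
    finally show ?thesis by (simp add: one_pCons)
  qed
  have s2: "cg ?Q t m (s^2) [:\<Delta>:]"
  proof -
    have "s^2 - [:\<Delta>:] = fp t m * [:4:]"
      unfolding s_def \<Delta>_def by (simp add: fp_def mult_pCons_left algebra_simps power2_eq_square)
    then show ?thesis using cg_fp cg_diff0 by metis
  qed
  obtain \<epsilon> where eps: "[\<Delta> ^ h = \<epsilon>] (mod ?Q)" "(\<epsilon> = 0 \<and> ?Q dvd \<Delta>) \<or> \<epsilon> = 1 \<or> \<epsilon> = -1"
    using eps_exists[OF q(1) h] by blast
  have sq: "cg ?Q t m (s ^ q) (smult \<epsilon> s)"
  proof -
    have "s ^ q = s * (s^2) ^ h" unfolding h by (simp add: power_mult power_add)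
    also have "cg ?Q t m \<dots> (s * [:\<Delta>:] ^ h)" by (intro cg_mult cg_refl cg_power s2)
    also have "s * [:\<Delta>:] ^ h = s * [:\<Delta> ^ h:]" by (simp add: poly_const_pow)
    also have "cg ?Q t m \<dots> (s * [:\<epsilon>:])" by (intro cg_mult cg_refl cg_const eps(1))
    finally show ?thesis by simp
  qed
  have two_z: "smult 2 z = [:c:] + smult b s" unfolding z_def c_def s_def by (simp add: algebra_simps)
  have A: "cg ?Q t m (smult 2 (z ^ q)) ([:c:] + smult (b * \<epsilon>) s)"
  proof -
    have "cg ?Q t m (smult 2 (z ^ q)) (smult (2 ^ q) (z ^ q))"
    proof -
      have "cg ?Q t m [:2:] [:2 ^ q:]" using cg_const fermat_int[OF q(1)] cong_sym by blast
      then show ?thesis unfolding cg_smult_const by (intro cg_mult cg_refl)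
    qed
    also have "smult (2 ^ q) (z ^ q) = (smult 2 z) ^ q" by (simp add: smult_power)
    also have "\<dots> = ([:c:] + smult b s) ^ q" by (simp add: two_z)
    also have "cg ?Q t m \<dots> ([:c:] ^ q + (smult b s) ^ q)" by (rule cg_frob[OF q(1)])
    also have "[:c:] ^ q + (smult b s) ^ q = [:c ^ q:] + [:b ^ q:] * s ^ q"
      by (simp add: poly_const_pow smult_power)
    also have "cg ?Q t m \<dots> ([:c:] + [:b:] * smult \<epsilon> s)"
      by (intro cg_add cg_mult cg_const fermat_int[OF q(1)] sq)
    finally show ?thesis by (simp add: mult.commute)
  qed
  from eps(2) show ?thesis
  proof (elim disjE conjE)
    assume e: "\<epsilon> = 1"
    have "cg ?Q t m (smult 2 (z ^ q)) (smult 2 z)" using A e two_z by simp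
    then have zq: "cg ?Q t m (z ^ q) z" using cg_cancel2 q(2) by simp
    have "cg ?Q t m (z ^ (q - 1)) (z ^ (q - 1) * (z * z'))" using cg_mult[OF cg_refl cg_sym[OF zz']] by simp
    also have "z ^ (q - 1) * (z * z') = z ^ q * z'" using q1
      by (metis Suc_diff_1 less_trans mult.assoc power_Suc2 zero_less_one)
    also have "cg ?Q t m \<dots> (z * z')" by (intro cg_mult zq cg_refl)
    also have "cg ?Q t m \<dots> 1" by (rule zz')
    finally show ?thesis unfolding z_def by blast
  next
    assume e: "\<epsilon> = -1"
    have "smult 2 z' = [:c:] + smult (b * \<epsilon>) s" unfolding e z'_def c_def s_def by (simp add: algebra_simps)
    then have "cg ?Q t m (smult 2 (z ^ q)) (smult 2 z')" using A by simp
    then have zq: "cg ?Q t m (z ^ q) z'" using cg_cancel2 q(2) by simp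
    have "z ^ (q + 1) = z ^ q * z" by simp
    also have "cg ?Q t m \<dots> (z' * z)" by (intro cg_mult zq cg_refl)
    also have "cg ?Q t m \<dots> 1" using zz' by (simp add: mult.commute)
    finally show ?thesis unfolding z_def by blast
  next
    assume e: "\<epsilon> = 0" and d: "?Q dvd \<Delta>"
    have A0: "cg ?Q t m (smult 2 (z ^ q)) [:c:]" using A e by simp
    have "c^2 = 4 * (a^2 + t * a * b - m * b^2) + b^2 * \<Delta>"
      unfolding c_def \<Delta>_def by (simp add: algebra_simps power2_eq_square)
    then have "[c^2 = 4 * 1 + 0] (mod ?Q)"
      by (metis cong_add cong_mult cong_refl nrm d cong_0_iff mult_zero_right dvd_mult)
    then have c4: "cg ?Q t m [:c^2:] [:4:]" using cg_const by simp
    have "smult 2 (smult 2 (z ^ (2 * q))) = (smult 2 (z ^ q)) ^ 2"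
      by (simp add: power_mult smult_power power2_eq_square mult.commute)
    also have "cg ?Q t m \<dots> ([:c:] ^ 2)" by (intro cg_power A0)
    also have "[:c:] ^ 2 = [:c^2:]" by (simp add: poly_const_pow)
    also have "cg ?Q t m \<dots> [:4:]" by (rule c4)
    also have "[:4:] = smult 2 (smult 2 (1 :: int poly))" by (simp add: one_pCons)
    finally have "cg ?Q t m (z ^ (2 * q)) 1" using cg_cancel2[of "int q"] q(2) by simp
    then show ?thesis unfolding z_def by blast
  qed
qed

lemma cg_gcd:
  assumes "cg q t m (Z ^ a) 1" "cg q t m (Z ^ b) 1" "a \<noteq> 0"
  shows "cg q t m (Z ^ gcd a b) 1"
proof -
  obtain x y where xy: "a * x = b * y + gcd a b" using bezout_nat assms(3) by blast
  have "cg q t m ((Z ^ a) ^ x) 1" using cg_power[OF assms(1), of x] by simp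
  moreover have "(Z ^ a) ^ x = (Z ^ b) ^ y * Z ^ gcd a b" by (simp add: power_mult[symmetric] power_add[symmetric] xy)
  moreover have "cg q t m ((Z ^ b) ^ y * Z ^ gcd a b) (1 * Z ^ gcd a b)"
    using cg_mult[OF cg_power[OF assms(2), of y] cg_refl] by simp
  ultimately show ?thesis by (metis cg_sym cg_trans mult_1)
qed

lemma prime_factor_cong:
  fixes D N :: int and p k l c j :: nat and w :: "int \<times> int" and q :: nat
  assumes "prime p" and "odd p"
    and "k > 0" and "c > 0"
    and "coprime (c * k) p"
    and "N = int (c * k * p ^ l) - 1"
    and "odd N"
    and "w \<in> G N D"
    and "1 \<le> j" and "j \<le> l"
    and cyc: "cyclo_prime_eval N D p (qpow N D w (c * k * p ^ (j - 1))) = qzero"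
    and q: "prime q" "int q dvd N"
  shows "p ^ j dvd q - 1 \<or> p ^ j dvd q + 1"
proof -
  define t where "t = tt D"
  define m where "m = mm D"
  obtain a b where w: "w = (a, b)" by (cases w)
  define Z where "Z = [:a, b:]"
  define s0 where "s0 = c * k * p ^ (j - 1)"
  define M where "M = c * k * p ^ j"
  have Ms0: "M = s0 * p" unfolding M_def s0_def using assms(9)
    by (metis (no_types, lifting) Suc_diff_le diff_Suc_1 mult.assoc power_Suc2)
  let ?Q = "int q"
  have "l > 0" using assms(9,10) by simp
  then have "p dvd p ^ l" by simp
  then have "p dvd c * k * p ^ l" by (simp add: dvd_mult)
  then have pN1: "int p dvd N + 1" using assms(6) by (metis add.commute diff_add_cancel int_dvd_int_iff)
  have qp: "q \<noteq> p"
  proof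
    assume "q = p"
    then have "int p dvd N" using q by simp
    then have "int p dvd 1" using pN1 by (metis add_diff_cancel_left' dvd_diff)
    then show False using assms(1) by simp
  qed
  have qodd: "odd q" using q(2) assms(7) by (metis dvd_trans even_of_nat_iff)
  have t01: "t = 0 \<or> t = 1" unfolding t_def tt_def by simp
  have nrmN: "[qnorm D (a, b) = 1] (mod N)" using assms(8) unfolding w G_def by simp
  have nrm: "[a^2 + t * a * b - m * b^2 = 1] (mod ?Q)"
    using cong_dvd_modulus[OF nrmN q(2)] unfolding qnorm_eq t_def m_def .
  obtain E where E: "E \<in> {q - 1, q + 1, 2 * q}" "cg ?Q t m (Z ^ E) 1"
    using key_E[OF q(1) qodd t01 nrm] unfolding Z_def by blast
  have ZU: "cg ?Q t m (pp (qpow N D w s0)) (Z ^ s0)"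
    using cg_dvd[OF q(2) qpow_cg[of N D w s0]] unfolding t_def m_def Z_def w pp_def by simp
  have "cg ?Q t m 0 (\<Sum>i<p. pp (qpow N D w s0) ^ i)"
    using cg_dvd[OF q(2) cyclo_cg[of N D p "qpow N D w s0"]] cyc
    unfolding t_def m_def s0_def by (simp add: pp_def qzero_def)
  also have "cg ?Q t m (\<Sum>i<p. pp (qpow N D w s0) ^ i) (\<Sum>i<p. (Z ^ s0) ^ i)"
    by (intro cg_sum cg_power ZU)
  finally have S0: "cg ?Q t m 0 (\<Sum>i<p. (Z ^ s0) ^ i)" .
  have ZM: "cg ?Q t m (Z ^ M) 1"
  proof -
    have "Z ^ M - 1 = (Z ^ s0 - 1) * (\<Sum>i<p. (Z ^ s0) ^ i)"
      unfolding Ms0 power_mult by (rule power_diff_1_eq)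
    moreover have "cg ?Q t m ((Z ^ s0 - 1) * (\<Sum>i<p. (Z ^ s0) ^ i)) ((Z ^ s0 - 1) * 0)"
      by (intro cg_mult cg_refl cg_sym[OF S0])
    ultimately show ?thesis using cg_diff0[of "int q" t m "Z ^ M" 1] by simp
  qed
  have notone: "\<not> cg ?Q t m (Z ^ s0) 1"
  proof
    assume h: "cg ?Q t m (Z ^ s0) 1"
    have "cg ?Q t m (\<Sum>i<p. (Z ^ s0) ^ i) (\<Sum>i<p. 1 ^ i)" by (intro cg_sum cg_power h)
    then have "cg ?Q t m 0 (\<Sum>i<p. 1 ^ i)" using S0 cg_trans by blast
    then have "cg ?Q t m [:int p, 0:] 0" by (simp add: of_nat_poly cg_sym)
    then have "?Q dvd int p" using cg_faithful by blast
    then have "q dvd p" by simp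
    then show False using qp q(1) assms(1) primes_dvd_imp_eq by blast
  qed
  show ?thesis
  proof (rule ccontr)
    assume nd: "\<not> ?thesis"
    have "\<not> p ^ j dvd E"
    proof
      assume pE: "p ^ j dvd E"
      show False
      proof (cases "E = 2 * q")
        case True
        have "p dvd p ^ j" using assms(9) dvd_power[of j p] by simp
        then have "p dvd 2 * q" using pE True dvd_trans by blast
        then have "p dvd 2 \<or> p dvd q" using assms(1) prime_dvd_mult_iff by blast
        then show False
        proof
          assume "p dvd 2"
          then have "p \<le> 2" by (simp add: dvd_imp_le)
          moreover have "p \<ge> 2" using assms(1) prime_ge_2_nat by blast
          ultimately show False using assms(2) by simp
        next
          assume "p dvd q"
          then show False using assms(1) q(1) qp primes_dvd_imp_eq by metis
        qed
      next
        case False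
        then show False using nd pE E(1) by auto
      qed
    qed
    have "gcd M E dvd s0"
    proof -
      have "gcd M E dvd gcd (c * k * p ^ j) (c * k * E)" unfolding M_def by simp
      also have "\<dots> = c * k * gcd (p ^ j) E" by (simp add: gcd_mult_left)
      finally have g1: "gcd M E dvd c * k * gcd (p ^ j) E" .
      obtain i where i: "i \<le> j" "gcd (p ^ j) E = p ^ i"
        using divides_primepow_nat[OF assms(1), of "gcd (p ^ j) E" j] by auto
      have "i \<noteq> j" using i \<open>\<not> p ^ j dvd E\<close> gcd_dvd2[of "p ^ j" E] by auto
      then have "p ^ i dvd p ^ (j - 1)" using i(1) by (simp add: le_imp_power_dvd)
      then have "c * k * p ^ i dvd c * k * p ^ (j - 1)" by (rule mult_dvd_mono[OF dvd_refl])
      then show ?thesis using g1 i(2) unfolding s0_def using dvd_trans by metis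
    qed
    moreover have "M \<noteq> 0" unfolding M_def using assms(1,3,4) by (simp add: prime_gt_0_nat)
    ultimately have g: "cg ?Q t m (Z ^ gcd M E) 1" "gcd M E dvd s0" using cg_gcd[OF ZM E(2)] by auto
    then obtain r where "s0 = gcd M E * r" by blast
    then have "cg ?Q t m (Z ^ s0) 1" using cg_power[OF g(1), of r] by (simp add: power_mult)
    then show False using notone by blast
  qed
qed

lemma divisor_pm1:
  fixes n P :: nat
  assumes H: "\<And>q. prime q \<Longrightarrow> q dvd n \<Longrightarrow> P dvd q - 1 \<or> P dvd q + 1" and "n > 0"
  shows "d dvd n \<Longrightarrow> [int d = 1] (mod int P) \<or> [int d = -1] (mod int P)"
proof (induction d rule: less_induct)
  case (less d)
  show ?case
  proof (cases "d = 1")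
    case True then show ?thesis by simp
  next
    case False
    have "d \<noteq> 0" using less(2) assms(2) by auto
    then obtain q where q: "prime q" "q dvd d" using False prime_factor_nat by blast
    then obtain d' where d': "d = q * d'" by blast
    have "d' < d" using d' \<open>d \<noteq> 0\<close> q(1) prime_gt_1_nat by (cases "d' = 0") auto
    moreover have "d' dvd n" using less(2) d' by (metis dvd_mult_right)
    ultimately have IH: "[int d' = 1] (mod int P) \<or> [int d' = -1] (mod int P)" using less(1) by blast
    have "q dvd n" using q(2) less(2) dvd_trans by blast
    then have "P dvd q - 1 \<or> P dvd q + 1" using H q(1) by blast
    moreover have "q \<ge> 1" using q(1) prime_gt_0_nat by (simp add: Suc_leI)
    ultimately have Hq: "[int q = 1] (mod int P) \<or> [int q = -1] (mod int P)"
    proof (elim disjE)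
      assume "P dvd q - 1" "q \<ge> 1"
      then have "int P dvd int (q - 1)" by (simp only: int_dvd_int_iff)
      then have "int P dvd int q - 1" using \<open>q \<ge> 1\<close> by (simp add: of_nat_diff)
      then show ?thesis by (simp add: cong_iff_dvd_diff)
    next
      assume "P dvd q + 1"
      then have "int P dvd int (q + 1)" by (simp only: int_dvd_int_iff)
      then have "int P dvd int q - (-1)" by (simp add: add.commute)
      then show ?thesis by (metis cong_iff_dvd_diff)
    qed
    have dd: "int d = int q * int d'" using d' by simp
    from Hq IH show ?thesis
    proof (elim disjE)
      assume "[int q = 1] (mod int P)" "[int d' = 1] (mod int P)"
      then have "[int q * int d' = 1 * 1] (mod int P)" by (rule cong_mult)
      then show ?thesis using dd by simp
    next
      assume "[int q = 1] (mod int P)" "[int d' = -1] (mod int P)"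
      then have "[int q * int d' = 1 * (-1)] (mod int P)" by (rule cong_mult)
      then show ?thesis using dd by simp
    next
      assume "[int q = -1] (mod int P)" "[int d' = 1] (mod int P)"
      then have "[int q * int d' = (-1) * 1] (mod int P)" by (rule cong_mult)
      then show ?thesis using dd by simp
    next
      assume "[int q = -1] (mod int P)" "[int d' = -1] (mod int P)"
      then have "[int q * int d' = (-1) * (-1)] (mod int P)" by (rule cong_mult)
      then show ?thesis using dd by simp
    qed
  qed
qed

lemma final_arith:
  fixes A B P :: int
  assumes "P \<ge> 3" "odd P" "A > 1" "B > 1" "odd B" "[A = 1] (mod P)" "[B = -1] (mod P)"
  shows "A * B > P^2"
proof -
  obtain x where x: "A - 1 = P * x" using assms(6) by (metis cong_iff_dvd_diff dvd_def)
  obtain y where y: "B + 1 = P * y" using assms(7) by (metis cong_iff_dvd_diff dvd_def diff_minus_eq_add)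
  have "P * x > 0" using x assms(3) by linarith
  then have "x > 0" using assms(1) by (simp add: zero_less_mult_iff)
  have "P * y > 0" using y assms(4) by linarith
  then have "y > 0" using assms(1) by (simp add: zero_less_mult_iff)
  have "y \<noteq> 1"
  proof
    assume "y = 1" then have "B = P - 1" using y by simp
    then show False using assms(2,5) by simp
  qed
  then have "y \<ge> 2" using \<open>y > 0\<close> by simp
  have "P * x \<ge> P * 1" using \<open>x > 0\<close> assms(1) by (intro mult_left_mono) auto
  then have A1: "A \<ge> P + 1" using x by linarith
  have "P * y \<ge> P * 2" using \<open>y \<ge> 2\<close> assms(1) by (intro mult_left_mono) auto
  then have B1: "B \<ge> 2 * P - 1" using y by linarith
  have "A * B \<ge> (P + 1) * (2 * P - 1)" using A1 B1 assms(1) by (intro mult_mono) auto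
  moreover have "(P + 1) * (2 * P - 1) = P * P + (P * P + P - 1)" by (simp add: algebra_simps)
  moreover have "P * P \<ge> 0" by simp
  moreover have "P^2 = P * P" by (simp add: power2_eq_square)
  ultimately show ?thesis using assms(1) by linarith
qed

theorem theorem1p2:
  fixes D N :: int and p k l c j :: nat and w :: "int \<times> int"
  assumes "squarefree D"
    and "prime p" and "odd p"
    and "k > 0" and "l > 0" and "c > 0"
    and "coprime (c * k) p"
    and "N = int (c * k * p ^ l) - 1"
    and "odd N"
    and "jacobi D (nat N) = -1"
    and "w \<in> G N D"
    and "1 \<le> j" and "j \<le> l"
    and "cyclo_prime_eval N D p (qpow N D w (c * k * p ^ (j - 1))) = qzero"
    and "2 * real j \<ge> log (real p) (real (c * k)) + real l"
  shows "prime N"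
proof (rule ccontr)
  assume np: "\<not> prime N"
  define n where "n = nat N"
  define P where "P = p ^ j"
  have p3: "p \<ge> 3" using assms(2,3) prime_ge_2_nat
    by (metis One_nat_def Suc_1 Suc_le_eq dvd_refl le_neq_implies_less numeral_3_eq_3)
  have "c * k * p ^ l \<ge> 1 * 1 * 3" using assms(4,6) p3 assms(5)
    by (intro mult_mono) (auto simp: order.trans[OF _ power_increasing[of 1 l p]]) 
  then have N2: "N \<ge> 2" using assms(8) by linarith
  have Nn: "N = int n" using N2 unfolding n_def by simp
  have n0: "n > 0" using N2 unfolding n_def by simp
  have nnp: "\<not> prime n" using np Nn by simp
  have H: "P dvd q - 1 \<or> P dvd q + 1" if "prime q" "q dvd n" for q
    using prime_factor_cong[OF assms(2,3,4,6,7,8,9,11,12,13,14) that(1)] that(2) Nn P_def by simp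
  have cong: "[int d = 1] (mod int P) \<or> [int d = -1] (mod int P)" if "d dvd n" for d
    using divisor_pm1[OF H n0 that] by blast
  obtain a where a: "a dvd n" "a \<noteq> 1" "a \<noteq> n"
  proof -
    have "n > 1" using N2 Nn by simp
    then show ?thesis using nnp that unfolding prime_nat_iff by auto
  qed
  define b where "b = n div a"
  have nab: "n = a * b" unfolding b_def using a(1) by simp
  have a1: "a > 1" using a n0 nab by (cases a) auto
  have b1: "b > 1" using a n0 nab by (cases b) (auto)
  have bdv: "b dvd n" using nab by simp
  have "p \<le> p ^ j" using p3 assms(12) by (simp add: self_le_power)
  then have Pge: "P \<ge> 3" unfolding P_def using p3 by linarith
  have Podd: "odd (int P)" unfolding P_def using assms(3) by simp
  have "P dvd p ^ l" unfolding P_def using assms(13) by (simp add: le_imp_power_dvd)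
  then have "P dvd c * k * p ^ l" by (simp add: dvd_mult)
  then have "int P dvd int (c * k * p ^ l)" by (simp only: int_dvd_int_iff)
  moreover have "N + 1 = int (c * k * p ^ l)" using assms(8) by linarith
  ultimately have "int P dvd N + 1" by simp
  then have Ncong: "[int a * int b = -1] (mod int P)"
  proof -
    have "int a * int b - (-1) = N + 1" using Nn nab by simp
    then show ?thesis using \<open>int P dvd N + 1\<close> by (simp add: cong_iff_dvd_diff)
  qed
  have bodd: "odd (int b)" using assms(9) Nn nab by simp
  have aodd: "odd (int a)" using assms(9) Nn nab by simp
  have bound: "N + 1 \<le> int P ^ 2"
  proof -
    have pr: "real p > 1" using p3 by simp
    have ck: "real (c * k) > 0" using assms(4,6) by simp
    have "log (real p) (real (c * k)) \<le> real (2 * j) - real l" using assms(15) by simp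
    then have "real p powr log (real p) (real (c * k)) \<le> real p powr (real (2 * j) - real l)"
      using pr by (intro powr_mono) auto
    moreover have "real p powr log (real p) (real (c * k)) = real (c * k)"
      using pr ck by (intro powr_log_cancel) auto
    ultimately have "real (c * k) \<le> real p powr (real (2 * j) - real l)" by simp
    then have "real (c * k) * real p powr real l \<le> real p powr (real (2 * j) - real l) * real p powr real l"
      using pr by (intro mult_right_mono) auto
    also have "\<dots> = real p powr real (2 * j)" using pr by (simp add: powr_add[symmetric])
    also have "\<dots> = real p ^ (2 * j)" using pr by (intro powr_realpow) auto
    finally have "real (c * k) * real p powr real l \<le> real p ^ (2 * j)" .
    moreover have "real p powr real l = real p ^ l" using pr by (intro powr_realpow) auto
    ultimately have "real (c * k) * real p ^ l \<le> real p ^ (2 * j)" by simp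
    then have "real (c * k * p ^ l) \<le> real (P ^ 2)" unfolding P_def by (simp add: power_mult[symmetric] mult.commute)
    then have "c * k * p ^ l \<le> P ^ 2" by linarith
    then have "int (c * k * p ^ l) \<le> int (P ^ 2)" by (simp only: of_nat_le_iff)
    moreover have "N + 1 = int (c * k * p ^ l)" using assms(8) by linarith
    moreover have "int (P ^ 2) = int P ^ 2" by (rule of_nat_power)
    ultimately show ?thesis by linarith
  qed
  have PP: "int P \<ge> 3" using Pge by simp
  have A1: "int a > 1" "int b > 1" using a1 b1 by auto
  from cong[OF a(1)] cong[OF bdv] have "int a * int b > int P ^ 2"
  proof (elim disjE)
    assume h: "[int a = 1] (mod int P)" "[int b = 1] (mod int P)"
    then have "[int a * int b = 1 * 1] (mod int P)" by (rule cong_mult)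
    then have e: "[int a * int b = 1] (mod int P)" by simp
    have "[1 = -1] (mod int P)" by (rule cong_trans[OF cong_sym[OF e] Ncong])
    then have "int P dvd 2" by (simp add: cong_iff_dvd_diff)
    then have "int P \<le> 2" by (rule zdvd_imp_le) simp
    then show ?thesis using PP by linarith
  next
    assume h: "[int a = -1] (mod int P)" "[int b = -1] (mod int P)"
    then have "[int a * int b = (-1) * (-1)] (mod int P)" by (rule cong_mult)
    then have e: "[int a * int b = 1] (mod int P)" by simp
    have "[1 = -1] (mod int P)" by (rule cong_trans[OF cong_sym[OF e] Ncong])
    then have "int P dvd 2" by (simp add: cong_iff_dvd_diff)
    then have "int P \<le> 2" by (rule zdvd_imp_le) simp
    then show ?thesis using PP by linarith
  next
    assume "[int a = 1] (mod int P)" "[int b = -1] (mod int P)"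
    then show ?thesis using final_arith[OF PP Podd A1 bodd] by blast
  next
    assume "[int a = -1] (mod int P)" "[int b = 1] (mod int P)"
    then show ?thesis using final_arith[OF PP Podd A1(2) A1(1) aodd] by (simp add: mult.commute)
  qed
  then show False using bound Nn nab by simp
qed

end
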